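(* Let $G=(V,E)$ be a finite simple graph of order $n$ and let $T=n-1$. If $(x,y,z)$ is an optimal solution of the integer program with the constraints of the Time Step Model $\mathrm{TSM}(G,T)$ and objective "minimize $\sum_{v\in V}x^0_v-\frac{1}{2T}\sum_{t\in[T]}z^t$", then $C=\{v\in V\colon x^0_v=1\}$ is a minimum zero forcing set of $G$ with $\mathrm{PT}(G)=\mathrm{pt}(G,C)=\sum_{t\in[T]}z^t$.
   Context: Zero forcing: under the standard color change rule a filled vertex $u$ can force a non-filled vertex $v$ if $v$ is the only non-filled neighbor of $u$; $C\subseteq V$ is a zero forcing set if, starting with $C$ filled and repeatedly forcing, all of $V$ becomes filled; a minimum zero forcing set is one of minimum size. The propagation time $\mathrm{pt}(G,C)$ is the smallest $t^*$ such that, starting from $C^{[0]}=C$ and setting $C^{[t]}=C^{[t-1]}\cup\{v\notin C^{[t-1]}\colon$ some $u\in C^{[t-1]}$ has $v$ as its only neighbor outside $C^{[t-1]}\}$, one has $C^{[t^*]}=V$ ($\infty$ if $C$ is not a zero forcing set). $\mathrm{PT}(G)=\max\{\mathrm{pt}(G,C)\colon C$ a minimum zero forcing set$\}$. $N(u)$ is the neighborhood of $u$ and $d(u)=|N(u)|$. Time Step Model constraints: $A$ is the set of arcs containing $(u,v)$ and $(v,u)$ for each edge $\{u,v\}$, $[T]=\{1,\dots,T\}$. Binary variables $x^t_v$ ($v\in V$, $t\in\{0,\dots,T\}$), $y^t_a$ ($a\in A$, $t\in[T]$), $z^t$ ($t\in[T]$), with constraints: (1) $x^0_v+\sum_{t\in[T]}\sum_{a=(u,v)\in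 A}y^t_a=1$ for all $v$; (2) $y^t_a\leq x^{t-1}_u$ for all $a=(u,v)\in A$, $t\in[T]$; (3) $y^t_a\leq x^{t-1}_w$ for all $a=(u,v)\in A$, $w\in N(u)\setminus\{v\}$, $t\in[T]$; (4) $x^t_v=x^{t-1}_v+\sum_{a=(u,v)\in A}y^t_a$ for all $v$, $t\in[T]$; (5) $x^{t-1}_u-x^{t-1}_v+\sum_{w\in N(u)\setminus\{v\}}x^{t-1}_w\leq\sum_{a=(w,v)\in A}y^t_a+d(u)-1$ for all $(u,v)\in A$, $t\in[T]$; (6) $\frac1n\sum_{v\in V}(x^t_v-x^{t-1}_v)-z^t\leq0$ for all $t\in[T]$; (7) $z^t-\sum_{v\in V}(x^t_v-x^{t-1}_v)\leq 0$ for all $t\in[T]$. *)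

theory Defs
  imports Main "HOL-Library.Extended_Nat"
begin

definition simple_graph :: "'a set \<Rightarrow> ('a \<Rightarrow> 'a \<Rightarrow> bool) \<Rightarrow> bool" where
  "simple_graph V E \<longleftrightarrow> finite V \<and> (\<forall>u v. E u v \<longrightarrow> u \<in> V \<and> v \<in> V)
     \<and> (\<forall>u v. E u v \<longrightarrow> E v u) \<and> (\<forall>u. \<not> E u u)"

definition nbhd :: "'a set \<Rightarrow> ('a \<Rightarrow> 'a \<Rightarrow> bool) \<Rightarrow> 'a \<Rightarrow> 'a set" where
  "nbhd V E u = {w \<in> V. E u w}"

definition deg :: "'a set \<Rightarrow> ('a \<Rightarrow> 'a \<Rightarrow> bool) \<Rightarrow> 'a \<Rightarrow> nat" where
  "deg V E u = card (nbhd V E u)"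

definition arcs :: "'a set \<Rightarrow> ('a \<Rightarrow> 'a \<Rightarrow> bool) \<Rightarrow> ('a \<times> 'a) set" where
  "arcs V E = {(u, v). u \<in> V \<and> v \<in> V \<and> E u v}"

inductive filled :: "'a set \<Rightarrow> ('a \<Rightarrow> 'a \<Rightarrow> bool) \<Rightarrow> 'a set \<Rightarrow> 'a \<Rightarrow> bool"
  for V E C where
  init: "v \<in> C \<Longrightarrow> filled V E C v"
| force: "filled V E C u \<Longrightarrow> v \<in> nbhd V E u \<Longrightarrow>
          (\<forall>w \<in> nbhd V E u - {v}. filled V E C w) \<Longrightarrow> filled V E C v"

definition zero_forcing_set :: "'a set \<Rightarrow> ('a \<Rightarrow> 'a \<Rightarrow> bool) \<Rightarrow> 'a set \<Rightarrow> bool" where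
  "zero_forcing_set V E C \<longleftrightarrow> C \<subseteq> V \<and> (\<forall>v \<in> V. filled V E C v)"

definition min_zero_forcing_set :: "'a set \<Rightarrow> ('a \<Rightarrow> 'a \<Rightarrow> bool) \<Rightarrow> 'a set \<Rightarrow> bool" where
  "min_zero_forcing_set V E C \<longleftrightarrow> zero_forcing_set V E C \<and>
     (\<forall>C'. zero_forcing_set V E C' \<longrightarrow> card C \<le> card C')"

definition prop_step :: "'a set \<Rightarrow> ('a \<Rightarrow> 'a \<Rightarrow> bool) \<Rightarrow> 'a set \<Rightarrow> 'a set" where
  "prop_step V E C = C \<union> {v. v \<notin> C \<and> (\<exists>u \<in> C. nbhd V E u - C = {v})}"

definition pt :: "'a set \<Rightarrow> ('a \<Rightarrow> 'a \<Rightarrow> bool) \<Rightarrow> 'a set \<Rightarrow> enat" where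
  "pt V E C = (if \<exists>t. (prop_step V E ^^ t) C = V
               then enat (LEAST t. (prop_step V E ^^ t) C = V) else \<infinity>)"

definition PT :: "'a set \<Rightarrow> ('a \<Rightarrow> 'a \<Rightarrow> bool) \<Rightarrow> enat" where
  "PT V E = Sup {pt V E C | C. min_zero_forcing_set V E C}"

definition tsm_feasible :: "'a set \<Rightarrow> ('a \<Rightarrow> 'a \<Rightarrow> bool) \<Rightarrow> nat \<Rightarrow>
    ('a \<Rightarrow> nat \<Rightarrow> real) \<Rightarrow> ('a \<times> 'a \<Rightarrow> nat \<Rightarrow> real) \<Rightarrow> (nat \<Rightarrow> real) \<Rightarrow> bool" where
  "tsm_feasible V E T x y z \<longleftrightarrow>
     (\<forall>v \<in> V. \<forall>t \<in> {0..T}. x v t \<in> {0, 1}) \<and>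
     (\<forall>a \<in> arcs V E. \<forall>t \<in> {1..T}. y a t \<in> {0, 1}) \<and>
     (\<forall>t \<in> {1..T}. z t \<in> {0, 1}) \<and>
     \<comment> \<open>(1)\<close>
     (\<forall>v \<in> V. x v 0 + (\<Sum>t \<in> {1..T}. \<Sum>u \<in> {u. (u, v) \<in> arcs V E}. y (u, v) t) = 1) \<and>
     \<comment> \<open>(2)\<close>
     (\<forall>(u, v) \<in> arcs V E. \<forall>t \<in> {1..T}. y (u, v) t \<le> x u (t - 1)) \<and>
     \<comment> \<open>(3)\<close>
     (\<forall>(u, v) \<in> arcs V E. \<forall>w \<in> nbhd V E u - {v}. \<forall>t \<in> {1..T}. y (u, v) t \<le> x w (t - 1)) \<and>
     \<comment> \<open>(4)\<close>
     (\<forall>v \<in> V. \<forall>t \<in> {1..T}.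
        x v t = x v (t - 1) + (\<Sum>u \<in> {u. (u, v) \<in> arcs V E}. y (u, v) t)) \<and>
     \<comment> \<open>(5)\<close>
     (\<forall>(u, v) \<in> arcs V E. \<forall>t \<in> {1..T}.
        x u (t - 1) - x v (t - 1) + (\<Sum>w \<in> nbhd V E u - {v}. x w (t - 1))
          \<le> (\<Sum>w \<in> {w. (w, v) \<in> arcs V E}. y (w, v) t) + real (deg V E u) - 1) \<and>
     \<comment> \<open>(6)\<close>
     (\<forall>t \<in> {1..T}. (1 / real (card V)) * (\<Sum>v \<in> V. x v t - x v (t - 1)) - z t \<le> 0) \<and>
     \<comment> \<open>(7)\<close>
     (\<forall>t \<in> {1..T}. z t - (\<Sum>v \<in> V. x v t - x v (t - 1)) \<le> 0)"

definition tsm_objective :: "'a set \<Rightarrow> nat \<Rightarrow>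
    ('a \<Rightarrow> nat \<Rightarrow> real) \<Rightarrow> (nat \<Rightarrow> real) \<Rightarrow> real" where
  "tsm_objective V T x z = (\<Sum>v \<in> V. x v 0) - (1 / (2 * real T)) * (\<Sum>t \<in> {1..T}. z t)"

definition tsm_optimal :: "'a set \<Rightarrow> ('a \<Rightarrow> 'a \<Rightarrow> bool) \<Rightarrow> nat \<Rightarrow>
    ('a \<Rightarrow> nat \<Rightarrow> real) \<Rightarrow> ('a \<times> 'a \<Rightarrow> nat \<Rightarrow> real) \<Rightarrow> (nat \<Rightarrow> real) \<Rightarrow> bool" where
  "tsm_optimal V E T x y z \<longleftrightarrow> tsm_feasible V E T x y z \<and>
     (\<forall>x' y' z'. tsm_feasible V E T x' y' z' \<longrightarrow>
        tsm_objective V T x z \<le> tsm_objective V T x' z')"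

end

theory Submission imports Defs begin

lemma sum_ind_le: "p \<le> T \<Longrightarrow> (\<Sum>t\<in>{1..T}. if t \<le> p then 1 else (0::real)) = real p"
proof -
  assume "p \<le> T"
  then have "{1..T} \<inter> {t. t \<le> p} = {1..p}" by auto
  then show ?thesis by (simp add: sum.If_cases)
qed

lemma sum_ind_card: "finite V \<Longrightarrow> (\<Sum>v\<in>V. if v \<in> A then 1 else (0::real)) = real (card (V \<inter> A))"
  by (simp add: sum.If_cases)

lemma telescope:
  assumes "\<forall>t\<in>{1..T}. (f::nat\<Rightarrow>real) t = f (t-1) + s t"
  shows "f T = f 0 + (\<Sum>t\<in>{1..T}. s t)"
  using assms
proof (induction T)
  case 0 then show ?case by simp
next
  case (Suc T)
  then have "f T = f 0 + (\<Sum>t\<in>{1..T}. s t)" by auto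
  moreover have "f (Suc T) = f T + s (Suc T)" using Suc.prems by force
  ultimately show ?case by (simp add: sum.cl_ivl_Suc)
qed

lemma sg_fin: "simple_graph V E \<Longrightarrow> finite V" by (simp add: simple_graph_def)

lemma nbhd_V: "nbhd V E u \<subseteq> V" by (auto simp: nbhd_def)

lemma ps_subset: "C \<subseteq> prop_step V E C" by (auto simp: prop_step_def)

lemma ps_mem: "v \<in> prop_step V E D \<longleftrightarrow> v \<in> D \<or> (\<exists>u\<in>D. nbhd V E u - D = {v})"
  unfolding prop_step_def by blast

lemma single_diff: "N - D = {v} \<Longrightarrow> v \<in> N \<and> v \<notin> D"
  by auto

lemma single_diff_rest: "N - D = {v} \<Longrightarrow> w \<in> N \<Longrightarrow> w \<noteq> v \<Longrightarrow> w \<in> D"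
  by auto

lemma single_diffI: "v \<in> N \<Longrightarrow> v \<notin> D \<Longrightarrow> (\<forall>w\<in>N - {v}. w \<in> D) \<Longrightarrow> N - D = {v}"
  by blast

lemma ps_V: "C \<subseteq> V \<Longrightarrow> prop_step V E C \<subseteq> V"
proof
  fix v assume CV: "C \<subseteq> V" and "v \<in> prop_step V E C"
  then have "v \<in> C \<or> (\<exists>u\<in>C. nbhd V E u - C = {v})" by (simp only: ps_mem)
  then show "v \<in> V"
  proof
    assume "v \<in> C" then show ?thesis using CV by blast
  next
    assume "\<exists>u\<in>C. nbhd V E u - C = {v}"
    then obtain u where "nbhd V E u - C = {v}" by blast
    then have "v \<in> nbhd V E u" by (rule single_diff[THEN conjunct1])
    then show ?thesis using nbhd_V[of V E u] by (rule rev_subsetD)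
  qed
qed

lemma ps_iter_V: "C \<subseteq> V \<Longrightarrow> (prop_step V E ^^ t) C \<subseteq> V"
proof (induction t)
  case 0 then show ?case by simp
next
  case (Suc t) then show ?case using ps_V[of "(prop_step V E ^^ t) C" V E] by simp
qed

lemma ps_iter_mono: "s \<le> t \<Longrightarrow> (prop_step V E ^^ s) C \<subseteq> (prop_step V E ^^ t) C"
  by (rule lift_Suc_mono_le[where f="\<lambda>t. (prop_step V E ^^ t) C"]) (simp add: ps_subset)

lemma ps_VV: "prop_step V E V = V"
  using ps_V[of V V E] ps_subset[of V V E] by blast

lemma ps_empty: "prop_step V E {} = {}"
  unfolding prop_step_def by auto

lemma ps_iter_empty: "(prop_step V E ^^ t) {} = {}"
  by (induction t) (auto simp: ps_empty)

lemma ps_filled: "v \<in> (prop_step V E ^^ t) C \<Longrightarrow> filled V E C v"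
proof (induction t arbitrary: v)
  case 0 then show ?case by (auto intro: filled.init)
next
  case (Suc t)
  let ?D = "(prop_step V E ^^ t) C"
  from Suc.prems have "v \<in> prop_step V E ?D" by simp
  then have "v \<in> ?D \<or> (\<exists>u\<in>?D. nbhd V E u - ?D = {v})"
    by (simp only: ps_mem)
  then show ?case
  proof
    assume "v \<in> ?D" then show ?thesis using Suc.IH by blast
  next
    assume "\<exists>u\<in>?D. nbhd V E u - ?D = {v}"
    then obtain u where u: "u \<in> ?D" "nbhd V E u - ?D = {v}" by blast
    show ?thesis
    proof (rule filled.force[of _ _ _ u])
      show "filled V E C u" using u Suc.IH by blast
      show "v \<in> nbhd V E u" using u by blast
      show "\<forall>w\<in>nbhd V E u - {v}. filled V E C w" using u Suc.IH by blast
    qed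
  qed
qed

lemma fix_filled:
  assumes "filled V E C v" "C \<subseteq> D" "prop_step V E D = D"
  shows "v \<in> D"
  using assms
proof (induction rule: filled.induct)
  case (init v) then show ?case by blast
next
  case (force u v)
  show ?case
  proof (rule ccontr)
    assume "v \<notin> D"
    have "nbhd V E u - D = {v}"
      using force.hyps(2) \<open>v \<notin> D\<close> force.IH(2) force.prems by (intro single_diffI) auto
    then have "v \<in> prop_step V E D" using force.IH(1) force.prems by (auto simp: ps_mem)
    with force \<open>v \<notin> D\<close> show False by simp
  qed
qed

lemma zfs_reach:
  assumes "simple_graph V E" "zero_forcing_set V E C"
  shows "(prop_step V E ^^ k) C = V \<or> card C + k \<le> card ((prop_step V E ^^ k) C)"
proof (induction k)
  case 0 then show ?case by simp
next
  case (Suc k)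
  let ?D = "(prop_step V E ^^ k) C"
  have CV: "C \<subseteq> V" using assms(2) by (simp add: zero_forcing_set_def)
  have fin: "finite V" using assms(1) by (rule sg_fin)
  show ?case
  proof (cases "?D = V")
    case True then show ?thesis by (simp add: ps_VV)
  next
    case False
    with Suc have c: "card C + k \<le> card ?D" by blast
    have "prop_step V E ?D \<noteq> ?D"
    proof
      assume fx: "prop_step V E ?D = ?D"
      have "C \<subseteq> ?D" using ps_iter_mono[of 0 k V E C] by simp
      then have "V \<subseteq> ?D" using fix_filled[OF _ _ fx] assms(2)
        unfolding zero_forcing_set_def by blast
      with ps_iter_V[OF CV, where E=E and t=k] False show False by (meson subset_antisym)
    qed
    then have "?D \<subset> prop_step V E ?D" using ps_subset[of ?D V E] by (intro psubsetI) auto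
    moreover have "finite (prop_step V E ?D)"
      by (rule finite_subset[OF ps_V[OF ps_iter_V[OF CV]] fin])
    ultimately have "card ?D < card (prop_step V E ?D)" by (simp add: psubset_card_mono)
    with c show ?thesis by simp
  qed
qed

lemma zfs_reach2:
  assumes "simple_graph V E" "zero_forcing_set V E C"
  shows "(prop_step V E ^^ (card V - card C)) C = V"
proof -
  let ?k = "card V - card C"
  let ?D = "(prop_step V E ^^ ?k) C"
  have CV: "C \<subseteq> V" using assms(2) by (simp add: zero_forcing_set_def)
  have fin: "finite V" using assms(1) by (rule sg_fin)
  have DV: "?D \<subseteq> V" using ps_iter_V[OF CV] .
  have "card C \<le> card V" using card_mono[OF fin CV] .
  moreover have "card ?D \<le> card V" using card_mono[OF fin DV] .
  ultimately have "?D = V \<or> card ?D = card V" using zfs_reach[OF assms, of ?k] by linarith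
  then show ?thesis using card_subset_eq[OF fin DV] by blast
qed


lemma arc_iff: "(u, v) \<in> arcs V E \<longleftrightarrow> u \<in> V \<and> v \<in> nbhd V E u"
  by (auto simp: arcs_def nbhd_def)

lemma fin_nbhd: "simple_graph V E \<Longrightarrow> finite (nbhd V E u)"
  by (rule finite_subset[OF nbhd_V sg_fin])

lemma fin_in: "simple_graph V E \<Longrightarrow> finite {u. (u, v) \<in> arcs V E}"
proof -
  assume "simple_graph V E"
  moreover have "{u. (u, v) \<in> arcs V E} \<subseteq> V" by (auto simp: arc_iff)
  ultimately show ?thesis using finite_subset sg_fin by metis
qed

lemma c5_sets:
  fixes X :: "'a set"
  assumes sg: "simple_graph V E" and arc: "(u, v) \<in> arcs V E"
  defines "L \<equiv> (if u \<in> X then 1 else 0) - (if v \<in> X then 1 else 0)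
     + (\<Sum>w\<in>nbhd V E u - {v}. if w \<in> X then 1 else (0::real))"
  shows "u \<in> X \<and> v \<notin> X \<and> nbhd V E u - {v} \<subseteq> X \<Longrightarrow> L = real (deg V E u)"
    and "\<not> (u \<in> X \<and> v \<notin> X \<and> nbhd V E u - {v} \<subseteq> X) \<Longrightarrow> L \<le> real (deg V E u) - 1"
proof -
  let ?N = "nbhd V E u - {v}"
  have finN: "finite ?N" using fin_nbhd[OF sg] by blast
  have vN: "v \<in> nbhd V E u" using arc by (simp add: arc_iff)
  have dg: "deg V E u \<ge> 1" unfolding deg_def using vN fin_nbhd[OF sg]
    by (metis One_nat_def Suc_leI card_gt_0_iff empty_iff)
  have m: "card ?N = deg V E u - 1" unfolding deg_def using vN fin_nbhd[OF sg] by simp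
  have rm: "real (card ?N) = real (deg V E u) - 1" using m dg by simp
  have sm: "(\<Sum>w\<in>?N. if w \<in> X then 1 else (0::real)) = real (card (?N \<inter> X))"
    using sum_ind_card[OF finN] .
  have cle: "card (?N \<inter> X) \<le> card ?N" using finN by (simp add: card_mono)
  have ceq: "card (?N \<inter> X) = card ?N \<Longrightarrow> ?N \<subseteq> X"
    using card_subset_eq[OF finN, of "?N \<inter> X"] by blast
  have L: "L = (if u \<in> X then 1 else 0) - (if v \<in> X then 1 else 0) + real (card (?N \<inter> X))"
    unfolding L_def sm ..
  show "u \<in> X \<and> v \<notin> X \<and> ?N \<subseteq> X \<Longrightarrow> L = real (deg V E u)"
  proof -
    assume h: "u \<in> X \<and> v \<notin> X \<and> ?N \<subseteq> X"
    then have "?N \<inter> X = ?N" by blast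
    then show ?thesis using L h rm by simp
  qed
  show "\<not> (u \<in> X \<and> v \<notin> X \<and> ?N \<subseteq> X) \<Longrightarrow> L \<le> real (deg V E u) - 1"
  proof -
    assume h: "\<not> (u \<in> X \<and> v \<notin> X \<and> ?N \<subseteq> X)"
    have c1: "real (card (?N \<inter> X)) \<le> real (deg V E u) - 1" using cle rm by linarith
    show ?thesis
    proof (cases "?N \<subseteq> X")
      case True
      with h have "u \<notin> X \<or> v \<in> X" by blast
      then show ?thesis using L c1 by auto
    next
      case False
      then have "card (?N \<inter> X) < card ?N" using cle ceq by linarith
      then have "real (card (?N \<inter> X)) + 1 \<le> real (deg V E u) - 1" using rm by linarith
      then show ?thesis using L by auto
    qed
  qed
qed

lemma diff_card:
  assumes "finite V" "A \<subseteq> B"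
  shows "(\<Sum>v\<in>V. (if v \<in> B then 1 else 0) - (if v \<in> A then 1 else (0::real))) = real (card (V \<inter> (B - A)))"
proof -
  have "(\<Sum>v\<in>V. (if v \<in> B then 1 else 0) - (if v \<in> A then 1 else (0::real)))
      = (\<Sum>v\<in>V. if v \<in> B - A then 1 else (0::real))"
    using assms(2) by (intro sum.cong) auto
  also have "\<dots> = real (card (V \<inter> (B - A)))" using sum_ind_card[OF assms(1)] .
  finally show ?thesis .
qed


lemma sound:
  assumes sg: "simple_graph V E" and feas: "tsm_feasible V E T x y z"
  defines "C \<equiv> {v \<in> V. x v 0 = 1}"
  shows "\<forall>t\<le>T. \<forall>v\<in>V. x v t = (if v \<in> (prop_step V E ^^ t) C then 1 else 0)"
    and "(prop_step V E ^^ T) C = V"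
    and "\<forall>t\<in>{1..T}. z t = (if (prop_step V E ^^ t) C \<noteq> (prop_step V E ^^ (t - 1)) C then 1 else 0)"
proof -
  let ?D = "\<lambda>t. (prop_step V E ^^ t) C"
  have fin: "finite V" using sg by (rule sg_fin)
  have CV: "C \<subseteq> V" unfolding C_def by blast
  have DV: "\<And>t. ?D t \<subseteq> V" using ps_iter_V[OF CV] by blast
  have bx: "\<forall>v \<in> V. \<forall>t \<in> {0..T}. x v t \<in> {0, 1}" using feas unfolding tsm_feasible_def by blast
  have by': "\<forall>a \<in> arcs V E. \<forall>t \<in> {1..T}. y a t \<in> {0, 1}" using feas unfolding tsm_feasible_def by blast
  have bz: "\<forall>t \<in> {1..T}. z t \<in> {0, 1}" using feas unfolding tsm_feasible_def by blast
  have c1: "\<forall>v \<in> V. x v 0 + (\<Sum>t \<in> {1..T}. \<Sum>u \<in> {u. (u, v) \<in> arcs V E}. y (u, v) t) = 1"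
    using feas unfolding tsm_feasible_def by blast
  have c2: "\<forall>(u, v) \<in> arcs V E. \<forall>t \<in> {1..T}. y (u, v) t \<le> x u (t - 1)"
    using feas unfolding tsm_feasible_def by blast
  have c3: "\<forall>(u, v) \<in> arcs V E. \<forall>w \<in> nbhd V E u - {v}. \<forall>t \<in> {1..T}. y (u, v) t \<le> x w (t - 1)"
    using feas unfolding tsm_feasible_def by blast
  have c4: "\<forall>v \<in> V. \<forall>t \<in> {1..T}.
        x v t = x v (t - 1) + (\<Sum>u \<in> {u. (u, v) \<in> arcs V E}. y (u, v) t)"
    using feas unfolding tsm_feasible_def by blast
  have c5: "\<forall>(u, v) \<in> arcs V E. \<forall>t \<in> {1..T}.
        x u (t - 1) - x v (t - 1) + (\<Sum>w \<in> nbhd V E u - {v}. x w (t - 1))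
          \<le> (\<Sum>w \<in> {w. (w, v) \<in> arcs V E}. y (w, v) t) + real (deg V E u) - 1"
    using feas unfolding tsm_feasible_def by blast
  have c6: "\<forall>t \<in> {1..T}. (1 / real (card V)) * (\<Sum>v \<in> V. x v t - x v (t - 1)) - z t \<le> 0"
    using feas unfolding tsm_feasible_def by blast
  have c7: "\<forall>t \<in> {1..T}. z t - (\<Sum>v \<in> V. x v t - x v (t - 1)) \<le> 0"
    using feas unfolding tsm_feasible_def by blast
  have c2': "\<And>u v t. (u, v) \<in> arcs V E \<Longrightarrow> t \<in> {1..T} \<Longrightarrow> y (u, v) t \<le> x u (t - 1)"
    using c2 by blast
  have c3': "\<And>u v w t. (u, v) \<in> arcs V E \<Longrightarrow> w \<in> nbhd V E u - {v} \<Longrightarrow> t \<in> {1..T} \<Longrightarrow> y (u, v) t \<le> x w (t - 1)"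
    using c3 by blast
  have c5': "\<And>u v t. (u, v) \<in> arcs V E \<Longrightarrow> t \<in> {1..T} \<Longrightarrow>
        x u (t - 1) - x v (t - 1) + (\<Sum>w \<in> nbhd V E u - {v}. x w (t - 1))
          \<le> (\<Sum>w \<in> {w. (w, v) \<in> arcs V E}. y (w, v) t) + real (deg V E u) - 1"
    using c5 by blast
  define s where "s v t = (\<Sum>u \<in> {u. (u, v) \<in> arcs V E}. y (u, v) t)" for v t
  have s_nn: "\<And>v t. t \<in> {1..T} \<Longrightarrow> s v t \<ge> 0"
    unfolding s_def using by' by (intro sum_nonneg) fastforce
  have xa: "\<forall>t\<le>T. \<forall>v\<in>V. x v t = (if v \<in> ?D t then 1 else 0)"
  proof (intro allI impI)
    fix t assume "t \<le> T"
    then show "\<forall>v\<in>V. x v t = (if v \<in> ?D t then 1 else 0)"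
    proof (induction t)
      case 0
      show ?case
      proof
        fix v assume "v \<in> V"
        then have "x v 0 \<in> {0,1}" using bx by auto
        then show "x v 0 = (if v \<in> ?D 0 then 1 else 0)" unfolding C_def using \<open>v \<in> V\<close> by auto
      qed
    next
      case (Suc t)
      then have IH: "\<forall>v\<in>V. x v t = (if v \<in> ?D t then 1 else 0)" by simp
      let ?S = "?D t"
      have tT: "Suc t \<in> {1..T}" using Suc.prems by simp
      show ?case
      proof
        fix v assume vV: "v \<in> V"
        have x4: "x v (Suc t) = x v t + s v (Suc t)" using c4 vV tT unfolding s_def by fastforce
        have bv: "x v (Suc t) \<in> {0,1}" using bx vV Suc.prems by auto
        have sn: "s v (Suc t) \<ge> 0" using s_nn tT by blast
        have DS: "?D (Suc t) = prop_step V E ?S" by simp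
        show "x v (Suc t) = (if v \<in> ?D (Suc t) then 1 else 0)"
        proof (cases "v \<in> ?S")
          case True
          then have "v \<in> prop_step V E ?S" using ps_subset[of ?S V E] by (rule rev_subsetD)
          then have "v \<in> ?D (Suc t)" using DS by simp
          moreover have "x v (Suc t) = 1" using True IH vV x4 sn bv by auto
          ultimately show ?thesis by simp
        next
          case False
          then have xv0: "x v t = 0" using IH vV by simp
          show ?thesis
          proof (cases "x v (Suc t) = 1")
            case True
            then have "s v (Suc t) \<noteq> 0" using x4 xv0 by simp
            have "\<exists>u\<in>{u. (u, v) \<in> arcs V E}. y (u, v) (Suc t) \<noteq> 0"
            proof (rule ccontr)
              assume "\<not> (\<exists>u\<in>{u. (u, v) \<in> arcs V E}. y (u, v) (Suc t) \<noteq> 0)"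
              then have "s v (Suc t) = 0" unfolding s_def by (intro sum.neutral) blast
              with \<open>s v (Suc t) \<noteq> 0\<close> show False by simp
            qed
            then obtain u where uarc: "(u, v) \<in> arcs V E" and yne: "y (u, v) (Suc t) \<noteq> 0"
              by blast
            have "y (u, v) (Suc t) = 1" using by' uarc tT yne by blast
            then have xu: "x u t \<ge> 1" using c2'[OF uarc tT] by simp
            have uV: "u \<in> V" and vN: "v \<in> nbhd V E u" using uarc by (auto simp: arc_iff)
            have uS: "u \<in> ?S" using IH uV xu by (auto split: if_splits)
            have wS: "\<forall>w\<in>nbhd V E u - {v}. w \<in> ?S"
            proof
              fix w assume w: "w \<in> nbhd V E u - {v}"
              then have "x w t \<ge> 1" using c3'[OF uarc w tT] \<open>y (u, v) (Suc t) = 1\<close> by simp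
              moreover have "w \<in> V" using w nbhd_V[of V E u] by blast
              ultimately show "w \<in> ?S" using IH by (auto split: if_splits)
            qed
            have "nbhd V E u - ?S = {v}" using vN False wS by (rule single_diffI)
            then have "v \<in> prop_step V E ?S" using uS by (auto simp: ps_mem)
            then show ?thesis using True DS by simp
          next
            case False
            then have xs0: "x v (Suc t) = 0" using bv by simp
            have "v \<notin> prop_step V E ?S"
            proof
              assume "v \<in> prop_step V E ?S"
              with \<open>v \<notin> ?S\<close> obtain u where uS: "u \<in> ?S" and nu: "nbhd V E u - ?S = {v}"
                by (auto simp: ps_mem)
              have vN: "v \<in> nbhd V E u" using nu by (rule single_diff[THEN conjunct1])
              have uV: "u \<in> V" using uS DV[of t] by blast
              have uarc: "(u, v) \<in> arcs V E" using uV vN by (simp add: arc_iff)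
              have sub: "nbhd V E u - {v} \<subseteq> ?S" using nu by blast
              have L: "(if u \<in> ?S then 1 else 0) - (if v \<in> ?S then 1 else 0)
                 + (\<Sum>w\<in>nbhd V E u - {v}. if w \<in> ?S then 1 else (0::real)) = real (deg V E u)"
                using c5_sets(1)[OF sg uarc] uS \<open>v \<notin> ?S\<close> sub by blast
              have "(\<Sum>w\<in>nbhd V E u - {v}. x w t) = (\<Sum>w\<in>nbhd V E u - {v}. if w \<in> ?S then 1 else (0::real))"
                using IH nbhd_V[of V E u] by (intro sum.cong) auto
              moreover have "x u t = (if u \<in> ?S then 1 else 0)" "x v t = (if v \<in> ?S then 1 else 0)"
                using IH uV vV by auto
              ultimately have "x u t - x v t + (\<Sum>w\<in>nbhd V E u - {v}. x w t) = real (deg V E u)"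
                using L by simp
              moreover have "x u t - x v t + (\<Sum>w\<in>nbhd V E u - {v}. x w t) \<le> s v (Suc t) + real (deg V E u) - 1"
                using c5'[OF uarc tT] unfolding s_def by simp
              moreover have "s v (Suc t) = 0" using x4 xv0 xs0 by simp
              ultimately show False by simp
            qed
            then show ?thesis using xs0 DS by simp
          qed
        qed
      qed
    qed
  qed
  then show "\<forall>t\<le>T. \<forall>v\<in>V. x v t = (if v \<in> ?D t then 1 else 0)" .
  have DT: "?D T = V"
  proof
    show "?D T \<subseteq> V" using DV .
    show "V \<subseteq> ?D T"
    proof
      fix v assume vV: "v \<in> V"
      have "\<forall>t\<in>{1..T}. x v t = x v (t - 1) + s v t" using c4 vV unfolding s_def by blast
      then have "x v T = x v 0 + (\<Sum>t\<in>{1..T}. s v t)" by (rule telescope)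
      also have "\<dots> = 1" using c1 vV unfolding s_def by blast
      finally have "x v T = 1" .
      then show "v \<in> ?D T" using xa vV by (auto split: if_splits)
    qed
  qed
  then show "?D T = V" .
  show "\<forall>t\<in>{1..T}. z t = (if ?D t \<noteq> ?D (t - 1) then 1 else 0)"
  proof
    fix t assume tT: "t \<in> {1..T}"
    have sub: "?D (t - 1) \<subseteq> ?D t" by (rule ps_iter_mono) simp
    have "(\<Sum>v \<in> V. x v t - x v (t - 1)) = (\<Sum>v\<in>V. (if v \<in> ?D t then 1 else 0) - (if v \<in> ?D (t - 1) then 1 else (0::real)))"
      using xa tT by (intro sum.cong) auto
    also have "\<dots> = real (card (V \<inter> (?D t - ?D (t - 1))))" using diff_card[OF fin sub] .
    finally have sm: "(\<Sum>v \<in> V. x v t - x v (t - 1)) = real (card (V \<inter> (?D t - ?D (t - 1))))" .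
    have zb: "z t \<in> {0,1}" using bz tT by blast
    show "z t = (if ?D t \<noteq> ?D (t - 1) then 1 else 0)"
    proof (cases "?D t = ?D (t - 1)")
      case True
      then have "z t \<le> 0" using c7 tT sm by fastforce
      then show ?thesis using zb True by auto
    next
      case False
      then obtain w where "w \<in> ?D t" "w \<notin> ?D (t - 1)" using sub by blast
      then have "w \<in> V \<inter> (?D t - ?D (t - 1))" using DV[of t] by blast
      then have cpos: "card (V \<inter> (?D t - ?D (t - 1))) > 0" using fin by (auto simp: card_gt_0_iff)
      have "card V > 0" using fin \<open>w \<in> V \<inter> _\<close> by (auto simp: card_gt_0_iff)
      then have "(1 / real (card V)) * real (card (V \<inter> (?D t - ?D (t - 1)))) > 0" using cpos by simp
      then have "z t > 0" using c6 tT sm by fastforce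
      then show ?thesis using zb False by auto
    qed
  qed
qed


lemma least_props:
  assumes sg: "simple_graph V E" and zfs: "zero_forcing_set V E C"
  defines "p \<equiv> LEAST t. (prop_step V E ^^ t) C = V"
  shows "(prop_step V E ^^ p) C = V"
    and "\<And>t. 1 \<le> t \<Longrightarrow> ((prop_step V E ^^ t) C \<noteq> (prop_step V E ^^ (t - 1)) C \<longleftrightarrow> t \<le> p)"
    and "pt V E C = enat p"
    and "p \<le> card V - card C"
proof -
  let ?D = "\<lambda>t. (prop_step V E ^^ t) C"
  have CV: "C \<subseteq> V" using zfs by (simp add: zero_forcing_set_def)
  have DV: "\<And>t. ?D t \<subseteq> V" using ps_iter_V[OF CV] by blast
  have ex: "?D (card V - card C) = V" using zfs_reach2[OF sg zfs] .
  show Dp: "?D p = V" unfolding p_def using ex by (rule LeastI)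
  show "p \<le> card V - card C" unfolding p_def using ex by (rule Least_le)
  show "pt V E C = enat p" unfolding pt_def p_def using ex by auto
  fix t :: nat assume t1: "1 \<le> t"
  have Dsuc: "?D t = prop_step V E (?D (t - 1))"
  proof -
    have "t = Suc (t - 1)" using t1 by simp
    then have "?D t = ?D (Suc (t - 1))" by simp
    then show ?thesis by simp
  qed
  show "?D t \<noteq> ?D (t - 1) \<longleftrightarrow> t \<le> p"
  proof
    assume ne: "?D t \<noteq> ?D (t - 1)"
    show "t \<le> p"
    proof (rule ccontr)
      assume "\<not> t \<le> p"
      then have "p \<le> t - 1" "p \<le> t" by auto
      then have "V \<subseteq> ?D (t - 1)" "V \<subseteq> ?D t" using ps_iter_mono[of p "t - 1" V E C] ps_iter_mono[of p t V E C] Dp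
        by auto
      then have "?D t = ?D (t - 1)" using DV[of t] DV[of "t - 1"] by blast
      with ne show False by simp
    qed
  next
    assume tp: "t \<le> p"
    show "?D t \<noteq> ?D (t - 1)"
    proof
      assume eq: "?D t = ?D (t - 1)"
      have "t - 1 < p" using tp t1 by simp
      then have nV: "?D (t - 1) \<noteq> V" unfolding p_def by (rule not_less_Least)
      have fx: "prop_step V E (?D (t - 1)) = ?D (t - 1)" using Dsuc eq by simp
      have "C \<subseteq> ?D (t - 1)" using ps_iter_mono[of 0 "t - 1" V E C] by simp
      then have "\<forall>v\<in>V. v \<in> ?D (t - 1)" using fix_filled[OF _ _ fx] zfs
        unfolding zero_forcing_set_def by blast
      then have "?D (t - 1) = V" using DV[of "t - 1"] by blast
      with nV show False by simp
    qed
  qed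
qed

lemma complete:
  assumes sg: "simple_graph V E" and zfs: "zero_forcing_set V E C"
    and pT: "(LEAST t. (prop_step V E ^^ t) C = V) \<le> T"
  shows "\<exists>x y z. tsm_feasible V E T x y z \<and> (\<forall>v\<in>V. x v 0 = (if v \<in> C then 1 else 0)) \<and>
     (\<forall>t\<in>{1..T}. z t = (if (prop_step V E ^^ t) C \<noteq> (prop_step V E ^^ (t - 1)) C then 1 else 0))"
proof -
  define D where "D t = (prop_step V E ^^ t) C" for t
  define p where "p = (LEAST t. (prop_step V E ^^ t) C = V)"
  have fin: "finite V" using sg by (rule sg_fin)
  have CV: "C \<subseteq> V" using zfs by (simp add: zero_forcing_set_def)
  have DV: "\<And>t. D t \<subseteq> V" unfolding D_def using ps_iter_V[OF CV] by blast
  have mono: "\<And>t. D (t - 1) \<subseteq> D t" unfolding D_def by (rule ps_iter_mono) simp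
  have Dp: "D p = V" unfolding D_def p_def using least_props(1)[OF sg zfs] .
  have DT: "D T = V"
  proof -
    have "p \<le> T" using pT unfolding p_def .
    then have "D p \<subseteq> D T" unfolding D_def by (rule ps_iter_mono)
    then show ?thesis using Dp DV[of T] by blast
  qed
  have Dsuc: "\<And>t. 1 \<le> t \<Longrightarrow> D t = prop_step V E (D (t - 1))"
  proof -
    fix t :: nat assume t1: "1 \<le> t"
    have "t = Suc (t - 1)" using t1 by simp
    then have "D t = D (Suc (t - 1))" by simp
    then show "D t = prop_step V E (D (t - 1))" unfolding D_def by simp
  qed
  define f where "f t v = (SOME u. u \<in> D (t - 1) \<and> nbhd V E u - D (t - 1) = {v})" for t v
  have fprop: "\<And>t v. 1 \<le> t \<Longrightarrow> v \<in> D t \<Longrightarrow> v \<notin> D (t - 1) \<Longrightarrow>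
       f t v \<in> D (t - 1) \<and> nbhd V E (f t v) - D (t - 1) = {v}"
  proof -
    fix t :: nat and v assume t1: "1 \<le> t" and a: "v \<in> D t" "v \<notin> D (t - 1)"
    then have "v \<in> prop_step V E (D (t - 1))" using Dsuc[OF t1] by simp
    then have "\<exists>u. u \<in> D (t - 1) \<and> nbhd V E u - D (t - 1) = {v}" using a(2) by (auto simp: ps_mem)
    then show "f t v \<in> D (t - 1) \<and> nbhd V E (f t v) - D (t - 1) = {v}"
      unfolding f_def by (rule someI_ex)
  qed
  have farc: "\<And>t v. 1 \<le> t \<Longrightarrow> v \<in> D t \<Longrightarrow> v \<notin> D (t - 1) \<Longrightarrow> (f t v, v) \<in> arcs V E"
  proof -
    fix t :: nat and v assume a: "1 \<le> t" "v \<in> D t" "v \<notin> D (t - 1)"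
    have "f t v \<in> V" using fprop[OF a] DV[of "t - 1"] by blast
    moreover have "v \<in> nbhd V E (f t v)" using fprop[OF a] single_diff by metis
    ultimately show "(f t v, v) \<in> arcs V E" by (simp add: arc_iff)
  qed
  define x :: "'a \<Rightarrow> nat \<Rightarrow> real" where "x v t = (if v \<in> D t then 1 else 0)" for v t
  define y :: "'a \<times> 'a \<Rightarrow> nat \<Rightarrow> real" where
    "y a t = (if snd a \<in> D t \<and> snd a \<notin> D (t - 1) \<and> fst a = f t (snd a) then 1 else 0)" for a t
  define z :: "nat \<Rightarrow> real" where "z t = (if D t \<noteq> D (t - 1) then 1 else 0)" for t
  have inner: "\<And>v t. 1 \<le> t \<Longrightarrow>
     (\<Sum>u \<in> {u. (u, v) \<in> arcs V E}. y (u, v) t) = (if v \<in> D t \<and> v \<notin> D (t - 1) then 1 else 0)"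
  proof -
    fix v and t :: nat assume t1: "1 \<le> t"
    have finA: "finite {u. (u, v) \<in> arcs V E}" using fin_in[OF sg] .
    show "(\<Sum>u \<in> {u. (u, v) \<in> arcs V E}. y (u, v) t) = (if v \<in> D t \<and> v \<notin> D (t - 1) then 1 else 0)"
    proof (cases "v \<in> D t \<and> v \<notin> D (t - 1)")
      case True
      have "(\<Sum>u \<in> {u. (u, v) \<in> arcs V E}. y (u, v) t) = (\<Sum>u \<in> {u. (u, v) \<in> arcs V E}. if u = f t v then 1 else 0)"
        unfolding y_def using True by (intro sum.cong) auto
      also have "\<dots> = 1" using sum.delta[OF finA, of "f t v" "\<lambda>_. (1::real)"] farc[OF t1] True by simp
      finally show ?thesis using True by simp
    next
      case False
      then have "\<And>u. y (u, v) t = 0" unfolding y_def by auto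
      then show ?thesis using False by simp
    qed
  qed
  have inner_nn: "\<And>v t. 0 \<le> (\<Sum>u \<in> {u. (u, v) \<in> arcs V E}. y (u, v) t)"
    unfolding y_def by (intro sum_nonneg) simp
  have c4: "\<forall>v \<in> V. \<forall>t \<in> {1..T}.
        x v t = x v (t - 1) + (\<Sum>u \<in> {u. (u, v) \<in> arcs V E}. y (u, v) t)"
  proof (intro ballI)
    fix v t assume "v \<in> V" "t \<in> {1..T}"
    then have t1: "1 \<le> t" by simp
    show "x v t = x v (t - 1) + (\<Sum>u \<in> {u. (u, v) \<in> arcs V E}. y (u, v) t)"
      unfolding inner[OF t1] x_def using mono[of t] by auto
  qed
  have "tsm_feasible V E T x y z"
    unfolding tsm_feasible_def
  proof (intro conjI)
    show "\<forall>v\<in>V. \<forall>t\<in>{0..T}. x v t \<in> {0, 1}" unfolding x_def by simp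
    show "\<forall>a\<in>arcs V E. \<forall>t\<in>{1..T}. y a t \<in> {0, 1}" unfolding y_def by simp
    show "\<forall>t\<in>{1..T}. z t \<in> {0, 1}" unfolding z_def by simp
    show "\<forall>v \<in> V. x v 0 + (\<Sum>t \<in> {1..T}. \<Sum>u \<in> {u. (u, v) \<in> arcs V E}. y (u, v) t) = 1"
    proof
      fix v assume vV: "v \<in> V"
      have "\<forall>t\<in>{1..T}. x v t = x v (t - 1) + (\<Sum>u \<in> {u. (u, v) \<in> arcs V E}. y (u, v) t)"
        using c4 vV by blast
      then have "x v T = x v 0 + (\<Sum>t \<in> {1..T}. \<Sum>u \<in> {u. (u, v) \<in> arcs V E}. y (u, v) t)"
        by (rule telescope)
      moreover have "x v T = 1" unfolding x_def using DT vV by simp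
      ultimately show "x v 0 + (\<Sum>t \<in> {1..T}. \<Sum>u \<in> {u. (u, v) \<in> arcs V E}. y (u, v) t) = 1" by simp
    qed
    show "\<forall>(u, v) \<in> arcs V E. \<forall>t \<in> {1..T}. y (u, v) t \<le> x u (t - 1)"
    proof (intro ballI, clarify)
      fix u v t assume "(u, v) \<in> arcs V E" "t \<in> {1..T}"
      then have t1: "1 \<le> t" by simp
      show "y (u, v) t \<le> x u (t - 1)"
      proof (cases "v \<in> D t \<and> v \<notin> D (t - 1) \<and> u = f t v")
        case True
        then have "u \<in> D (t - 1)" using fprop[OF t1] by blast
        then show ?thesis unfolding x_def y_def by simp
      next
        case False
        then show ?thesis unfolding x_def y_def by auto
      qed
    qed
    show "\<forall>(u, v) \<in> arcs V E. \<forall>w \<in> nbhd V E u - {v}. \<forall>t \<in> {1..T}. y (u, v) t \<le> x w (t - 1)"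
    proof (intro ballI, clarify)
      fix u v w t assume "(u, v) \<in> arcs V E" "w \<in> nbhd V E u" "w \<noteq> v" "t \<in> {1..T}"
      then have t1: "1 \<le> t" by simp
      show "y (u, v) t \<le> x w (t - 1)"
      proof (cases "v \<in> D t \<and> v \<notin> D (t - 1) \<and> u = f t v")
        case True
        then have "nbhd V E u - D (t - 1) = {v}" using fprop[OF t1] by blast
        then have "w \<in> D (t - 1)" using \<open>w \<in> nbhd V E u\<close> \<open>w \<noteq> v\<close> by (rule single_diff_rest)
        then show ?thesis unfolding x_def y_def by simp
      next
        case False
        then show ?thesis unfolding x_def y_def by auto
      qed
    qed
    show "\<forall>v \<in> V. \<forall>t \<in> {1..T}.
        x v t = x v (t - 1) + (\<Sum>u \<in> {u. (u, v) \<in> arcs V E}. y (u, v) t)" using c4 .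
    show "\<forall>(u, v) \<in> arcs V E. \<forall>t \<in> {1..T}.
        x u (t - 1) - x v (t - 1) + (\<Sum>w \<in> nbhd V E u - {v}. x w (t - 1))
          \<le> (\<Sum>w \<in> {w. (w, v) \<in> arcs V E}. y (w, v) t) + real (deg V E u) - 1"
    proof (intro ballI, clarify)
      fix u v t assume arc: "(u, v) \<in> arcs V E" and tT: "t \<in> {1..T}"
      then have t1: "1 \<le> t" by simp
      let ?X = "D (t - 1)"
      have L: "x u (t - 1) - x v (t - 1) + (\<Sum>w \<in> nbhd V E u - {v}. x w (t - 1))
        = (if u \<in> ?X then 1 else 0) - (if v \<in> ?X then 1 else 0)
          + (\<Sum>w\<in>nbhd V E u - {v}. if w \<in> ?X then 1 else (0::real))"
        unfolding x_def ..
      show "x u (t - 1) - x v (t - 1) + (\<Sum>w \<in> nbhd V E u - {v}. x w (t - 1))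
          \<le> (\<Sum>w \<in> {w. (w, v) \<in> arcs V E}. y (w, v) t) + real (deg V E u) - 1"
      proof (cases "u \<in> ?X \<and> v \<notin> ?X \<and> nbhd V E u - {v} \<subseteq> ?X")
        case True
        have vN: "v \<in> nbhd V E u" using arc by (simp add: arc_iff)
        have "nbhd V E u - ?X = {v}" using vN True by (intro single_diffI) auto
        then have "v \<in> prop_step V E ?X" using True by (auto simp: ps_mem)
        then have "v \<in> D t" using Dsuc[OF t1] by simp
        then have "(\<Sum>w \<in> {w. (w, v) \<in> arcs V E}. y (w, v) t) = 1" using inner[OF t1] True by simp
        then show ?thesis unfolding L using c5_sets(1)[OF sg arc True] by simp
      next
        case False
        show ?thesis unfolding L using c5_sets(2)[OF sg arc False] inner_nn[of v t] by simp
      qed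
    qed
    have key: "\<And>t. (\<Sum>v \<in> V. x v t - x v (t - 1)) = real (card (V \<inter> (D t - D (t - 1))))
       \<and> card (V \<inter> (D t - D (t - 1))) \<le> card V
       \<and> (D t \<noteq> D (t - 1) \<longrightarrow> card (V \<inter> (D t - D (t - 1))) \<ge> 1)"
    proof -
      fix t :: nat
      have s1: "(\<Sum>v \<in> V. x v t - x v (t - 1)) = real (card (V \<inter> (D t - D (t - 1))))"
        unfolding x_def using diff_card[OF fin mono[of t]] .
      have s2: "card (V \<inter> (D t - D (t - 1))) \<le> card V" using card_mono[OF fin] by blast
      have s3: "card (V \<inter> (D t - D (t - 1))) \<ge> 1" if ne: "D t \<noteq> D (t - 1)"
      proof -
        obtain w where "w \<in> D t" "w \<notin> D (t - 1)" using ne mono[of t] by blast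
        then have "w \<in> V \<inter> (D t - D (t - 1))" using DV[of t] by blast
        then have "card (V \<inter> (D t - D (t - 1))) > 0" using fin by (auto simp: card_gt_0_iff)
        then show ?thesis by simp
      qed
      show "?thesis t" using s1 s2 s3 by blast
    qed
    show "\<forall>t \<in> {1..T}. (1 / real (card V)) * (\<Sum>v \<in> V. x v t - x v (t - 1)) - z t \<le> 0 "
    proof
      fix t assume "t \<in> {1..T}"
      show "(1 / real (card V)) * (\<Sum>v \<in> V. x v t - x v (t - 1)) - z t \<le> 0"
      proof (cases "D t = D (t - 1)")
        case True
        then show ?thesis using key[of t] unfolding z_def by simp
      next
        case False
        let ?c = "card (V \<inter> (D t - D (t - 1)))"
        have "?c \<ge> 1" "?c \<le> card V" using key[of t] False by auto
        then have "real ?c / real (card V) \<le> 1" by simp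
        then show ?thesis using key[of t] False unfolding z_def by simp
      qed
    qed
    show "\<forall>t \<in> {1..T}. z t - (\<Sum>v \<in> V. x v t - x v (t - 1)) \<le> 0"
    proof
      fix t assume "t \<in> {1..T}"
      show "z t - (\<Sum>v \<in> V. x v t - x v (t - 1)) \<le> 0"
        using key[of t] unfolding z_def by auto
    qed
  qed
  moreover have "\<forall>v\<in>V. x v 0 = (if v \<in> C then 1 else 0)" unfolding x_def D_def by simp
  moreover have "\<forall>t\<in>{1..T}. z t = (if (prop_step V E ^^ t) C \<noteq> (prop_step V E ^^ (t - 1)) C then 1 else 0)"
    unfolding z_def D_def by simp
  ultimately show ?thesis by blast
qed


lemma obj_arith:
  fixes c c' p p' T :: nat
  assumes "p \<le> T" "p' \<le> T"
    and h: "real c - (1 / (2 * real T)) * real p \<le> real c' - (1 / (2 * real T)) * real p'"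
  shows "c \<le> c' \<and> (c = c' \<longrightarrow> p' \<le> p)"
proof (cases "T = 0")
  case True
  then show ?thesis using assms by simp
next
  case False
  then have Tp: "real T > 0" by simp
  have "2 * real T * (real c - (1 / (2 * real T)) * real p) \<le> 2 * real T * (real c' - (1 / (2 * real T)) * real p')"
    using h Tp by (intro mult_left_mono) auto
  then have h2: "2 * real T * real c - real p \<le> 2 * real T * real c' - real p'"
    using Tp by (simp add: algebra_simps)
  have "c \<le> c'"
  proof (rule ccontr)
    assume "\<not> c \<le> c'"
    then have "real c \<ge> real c' + 1" by simp
    then have "2 * real T * real c \<ge> 2 * real T * (real c' + 1)" using Tp by (intro mult_left_mono) auto
    then show False using h2 assms(1,2) Tp by (simp add: algebra_simps)
  qed
  moreover have "c = c' \<longrightarrow> p' \<le> p" using h2 by auto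
  ultimately show ?thesis by blast
qed

lemma sum_z:
  assumes sg: "simple_graph V E" and zfs: "zero_forcing_set V E C"
    and pT: "(LEAST t. (prop_step V E ^^ t) C = V) \<le> T"
    and zc: "\<forall>t\<in>{1..T}. z t = (if (prop_step V E ^^ t) C \<noteq> (prop_step V E ^^ (t - 1)) C then 1 else (0::real))"
  shows "(\<Sum>t\<in>{1..T}. z t) = real (LEAST t. (prop_step V E ^^ t) C = V)"
proof -
  let ?p = "LEAST t. (prop_step V E ^^ t) C = V"
  have "(\<Sum>t\<in>{1..T}. z t) = (\<Sum>t\<in>{1..T}. if t \<le> ?p then 1 else (0::real))"
    using zc least_props(2)[OF sg zfs] by (intro sum.cong) auto
  also have "\<dots> = real ?p" using sum_ind_le[OF pT] .
  finally show ?thesis .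
qed

theorem corollary4p6:
  fixes V :: "'a set" and E :: "'a \<Rightarrow> 'a \<Rightarrow> bool"
    and x :: "'a \<Rightarrow> nat \<Rightarrow> real" and y :: "'a \<times> 'a \<Rightarrow> nat \<Rightarrow> real" and z :: "nat \<Rightarrow> real"
  assumes "simple_graph V E"
    and "T = card V - 1"
    and "tsm_optimal V E T x y z"
  shows "min_zero_forcing_set V E {v \<in> V. x v 0 = 1} \<and>
         (\<exists>k::nat. PT V E = enat k \<and> pt V E {v \<in> V. x v 0 = 1} = enat k \<and>
                   real k = (\<Sum>t \<in> {1..T}. z t))"
proof -
  note sg = assms(1)
  have fin: "finite V" using sg by (rule sg_fin)
  have feas: "tsm_feasible V E T x y z" using assms(3) by (simp add: tsm_optimal_def)
  have opt: "\<And>x' y' z'. tsm_feasible V E T x' y' z' \<Longrightarrow> tsm_objective V T x z \<le> tsm_objective V T x' z'"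
    using assms(3) by (simp add: tsm_optimal_def)
  define C where "C = {v \<in> V. x v 0 = 1}"
  let ?D = "\<lambda>t. (prop_step V E ^^ t) C"
  have xa: "\<forall>t\<le>T. \<forall>v\<in>V. x v t = (if v \<in> ?D t then 1 else 0)"
    using sound(1)[OF sg feas] unfolding C_def .
  have DT: "?D T = V" using sound(2)[OF sg feas] unfolding C_def .
  have zc: "\<forall>t\<in>{1..T}. z t = (if ?D t \<noteq> ?D (t - 1) then 1 else 0)"
    using sound(3)[OF sg feas] unfolding C_def .
  have CV: "C \<subseteq> V" unfolding C_def by blast
  have zfsC: "zero_forcing_set V E C"
    unfolding zero_forcing_set_def
  proof (intro conjI ballI)
    show "C \<subseteq> V" using CV .
    fix v assume "v \<in> V"
    then have "v \<in> ?D T" using DT by simp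
    then show "filled V E C v" by (rule ps_filled)
  qed
  define p where "p = (LEAST t. ?D t = V)"
  have pT: "p \<le> T" unfolding p_def using DT by (rule Least_le)
  have sz: "(\<Sum>t\<in>{1..T}. z t) = real p" unfolding p_def
    using sum_z[OF sg zfsC _ zc] pT unfolding p_def by blast
  have sx: "(\<Sum>v\<in>V. x v 0) = real (card C)"
  proof -
    have "(\<Sum>v\<in>V. x v 0) = (\<Sum>v\<in>V. if v \<in> C then 1 else (0::real))"
      using xa by (intro sum.cong) auto
    also have "\<dots> = real (card (V \<inter> C))" using sum_ind_card[OF fin] .
    also have "V \<inter> C = C" using CV by blast
    finally show ?thesis .
  qed
  have objC: "tsm_objective V T x z = real (card C) - (1 / (2 * real T)) * real p"
    unfolding tsm_objective_def sx sz ..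
  have cmp: "card C \<le> card C' \<and> (card C = card C' \<longrightarrow> (LEAST t. (prop_step V E ^^ t) C' = V) \<le> p)"
    if zfs': "zero_forcing_set V E C'" for C'
  proof -
    define p' where "p' = (LEAST t. (prop_step V E ^^ t) C' = V)"
    have C'V: "C' \<subseteq> V" using zfs' by (simp add: zero_forcing_set_def)
    have p'T: "p' \<le> T"
    proof (cases "V = {}")
      case True
      then have "C' = {}" using C'V by blast
      then have "(prop_step V E ^^ 0) C' = V" using True by simp
      then have "p' \<le> 0" unfolding p'_def by (rule Least_le)
      then show ?thesis by simp
    next
      case False
      have "C' \<noteq> {}"
      proof
        assume "C' = {}"
        then have "(prop_step V E ^^ (card V - card C')) C' = {}" by (simp add: ps_iter_empty)
        with zfs_reach2[OF sg zfs'] False show False by simp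
      qed
      then have "card C' \<ge> 1" using finite_subset[OF C'V fin] by (simp add: Suc_le_eq card_gt_0_iff)
      then show ?thesis using least_props(4)[OF sg zfs'] assms(2) unfolding p'_def by linarith
    qed
    obtain x' y' z' where f': "tsm_feasible V E T x' y' z'"
      and x0: "\<forall>v\<in>V. x' v 0 = (if v \<in> C' then 1 else 0)"
      and zc': "\<forall>t\<in>{1..T}. z' t = (if (prop_step V E ^^ t) C' \<noteq> (prop_step V E ^^ (t - 1)) C' then 1 else 0)"
      using complete[OF sg zfs'] p'T unfolding p'_def by blast
    have sz': "(\<Sum>t\<in>{1..T}. z' t) = real p'" unfolding p'_def
      using sum_z[OF sg zfs' _ zc'] p'T unfolding p'_def by blast
    have sx': "(\<Sum>v\<in>V. x' v 0) = real (card C')"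
    proof -
      have "(\<Sum>v\<in>V. x' v 0) = (\<Sum>v\<in>V. if v \<in> C' then 1 else (0::real))"
        using x0 by (intro sum.cong) auto
      also have "\<dots> = real (card (V \<inter> C'))" using sum_ind_card[OF fin] .
      also have "V \<inter> C' = C'" using C'V by blast
      finally show ?thesis .
    qed
    have "tsm_objective V T x' z' = real (card C') - (1 / (2 * real T)) * real p'"
      unfolding tsm_objective_def sx' sz' ..
    then have "real (card C) - (1 / (2 * real T)) * real p \<le> real (card C') - (1 / (2 * real T)) * real p'"
      using opt[OF f'] objC by simp
    then show ?thesis using obj_arith[OF pT p'T] unfolding p'_def by blast
  qed
  have minC: "min_zero_forcing_set V E C"
    unfolding min_zero_forcing_set_def using zfsC cmp by blast
  have ptC: "pt V E C = enat p" unfolding p_def using least_props(3)[OF sg zfsC] .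
  have PTv: "PT V E = enat p"
    unfolding PT_def
  proof (rule antisym)
    show "Sup {pt V E C' | C'. min_zero_forcing_set V E C'} \<le> enat p"
    proof (rule Sup_least)
      fix e assume "e \<in> {pt V E C' | C'. min_zero_forcing_set V E C'}"
      then obtain C' where mC': "min_zero_forcing_set V E C'" and e: "e = pt V E C'" by blast
      have zfs': "zero_forcing_set V E C'" using mC' by (simp add: min_zero_forcing_set_def)
      have "card C' \<le> card C" using mC' zfsC by (simp add: min_zero_forcing_set_def)
      then have "card C = card C'" using cmp[OF zfs'] by simp
      then have "(LEAST t. (prop_step V E ^^ t) C' = V) \<le> p" using cmp[OF zfs'] by blast
      then show "e \<le> enat p" unfolding e least_props(3)[OF sg zfs'] by simp
    qed
    show "enat p \<le> Sup {pt V E C' | C'. min_zero_forcing_set V E C'}"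
    proof (rule Sup_upper)
      have "enat p = pt V E C \<and> min_zero_forcing_set V E C" using minC ptC by simp
      then show "enat p \<in> {pt V E C' | C'. min_zero_forcing_set V E C'}" by blast
    qed
  qed
  show ?thesis
    unfolding C_def[symmetric] using minC PTv ptC sz by auto
qed

end
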